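(* The following subgroups of $\mathrm{Homeo}(\{0,1\}^{\mathbb N})$ are all equal: $\widehat S=\langle {}_yG_y,T\rangle=\langle G_y,T\rangle=\langle {}_yG,T\rangle=\langle G,T\rangle=\langle y_{10},T\rangle$.
   Context: Let $\{0,1\}^{\mathbb N}$ be the Cantor set of infinite binary sequences and $\{0,1\}^{<\mathbb N}$ the set of finite binary words, including the empty word; juxtaposition denotes concatenation, $0^n,1^n$ ($n\ge0$) denote constant words. Homeomorphisms act on the right. Define $x,y$ by $00\eta\cdot x=0\eta$, $01\eta\cdot x=10\eta$, $1\eta\cdot x=11\eta$, and recursively $00\eta\cdot y=0(\eta\cdot y)$, $01\eta\cdot y=10(\eta\cdot y^{-1})$, $1\eta\cdot y=11(\eta\cdot y)$; $x_s$ (resp. $y_s$) sends $s\eta\mapsto s(\eta\cdot x)$ (resp. $s(\eta\cdot y)$) and fixes sequences not beginning with $s$. $F=\langle x_s\rangle$; ${}_yG_y=\langle F,\ y_s\ (\text{all } s)\rangle$; $G_y=\langle F,\ y_s\ (s\ne0^n)\rangle$; ${}_yG=\langle F,\ y_s\ (s\ne 1^n)\rangle$; $G=\langle F,\ y_s\ (s\notin\{0^n,1^n\})\rangle$. For $n\ge0$, $p_n$ is the homeomorphism with $1^k0\eta\cdot p_n=1^{k+1}0\eta$ for $0\le k\le n-1$, $1^n0\eta\cdot p_n=1^{n+1}\eta$, $1^{n+1}\eta\cdot p_n=0\eta$; $T=\langle F,p_n\ (n\ge0)\rangle$. $\widehat S$ denotes the group generated by all $x_s,y_s,p_n$. *)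

theory Defs
  imports "HOL-Library.Stream" "HOL-Library.BNF_Corec" "HOL-Algebra.Bij" "HOL-Algebra.Generated_Groups"
begin

text \<open>Cantor set: bool stream (False = 0, True = 1); finite words: bool list.
  Homeomorphisms are represented as functions; composition in BijGroup.\<close>

definition xmap :: "bool stream \<Rightarrow> bool stream" where
  "xmap s = (if shd s then True ## True ## stl s
             else if shd (stl s) then True ## False ## stl (stl s)
             else False ## stl (stl s))"

text \<open>ygen True is y, ygen False is y inverse.\<close>
corec ygen :: "bool \<Rightarrow> bool stream \<Rightarrow> bool stream" where
  "ygen b s = (if b then
      (if shd s then True ## True ## ygen True (stl s)
       else if shd (stl s) then True ## False ## ygen False (stl (stl s))
       else False ## ygen True (stl (stl s)))
    else
      (if \<not> shd s then False ## False ## ygen False (stl s)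
       else if \<not> shd (stl s) then False ## True ## ygen True (stl (stl s))
       else True ## ygen False (stl (stl s))))"

definition ymap :: "bool stream \<Rightarrow> bool stream" where
  "ymap = ygen True"

definition at_word :: "bool list \<Rightarrow> (bool stream \<Rightarrow> bool stream) \<Rightarrow> bool stream \<Rightarrow> bool stream" where
  "at_word w f s = (if stake (length w) s = w then w @- f (sdrop (length w) s) else s)"

definition x_at :: "bool list \<Rightarrow> bool stream \<Rightarrow> bool stream" where
  "x_at w = at_word w xmap"

definition y_at :: "bool list \<Rightarrow> bool stream \<Rightarrow> bool stream" where
  "y_at w = at_word w ymap"

definition pmap :: "nat \<Rightarrow> bool stream \<Rightarrow> bool stream" where
  "pmap n s = (if stake (n + 1) s = replicate (n + 1) True then False ## sdrop (n + 1) s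
     else (let k = (LEAST k. s !! k = False) in
       if k < n then replicate (k + 1) True @- False ## sdrop (k + 1) s
       else replicate (n + 1) True @- sdrop (n + 1) s))"

abbreviation BG :: "(bool stream \<Rightarrow> bool stream) monoid" where
  "BG \<equiv> BijGroup (UNIV :: bool stream set)"

definition grpF where "grpF = generate BG (range x_at)"
definition grp_yGy where "grp_yGy = generate BG (grpF \<union> range y_at)"
definition grp_Gy where
  "grp_Gy = generate BG (grpF \<union> y_at ` {w. \<forall>n. w \<noteq> replicate n False})"
definition grp_yG where
  "grp_yG = generate BG (grpF \<union> y_at ` {w. \<forall>n. w \<noteq> replicate n True})"
definition grp_G where
  "grp_G = generate BG (grpF \<union> y_at ` {w. \<forall>n. w \<noteq> replicate n False \<and> w \<noteq> replicate n True})"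
definition grpT where "grpT = generate BG (grpF \<union> range pmap)"
definition grpShat where "grpShat = generate BG (range x_at \<union> range y_at \<union> range pmap)"

end

theory Submission
  imports Defs
begin

lemma stream_eqI: "(\<And>n. s !! n = t !! n) \<Longrightarrow> s = t"
  using smap_alt[of id s t] by (simp add: stream.map_id)
lemma ygen_simps:
  "ygen True (False ## False ## s) = False ## ygen True s"
  "ygen True (False ## True ## s) = True ## False ## ygen False s"
  "ygen True (True ## s) = True ## True ## ygen True s"
  "ygen False (True ## True ## s) = True ## ygen False s"
  "ygen False (True ## False ## s) = False ## True ## ygen True s"
  "ygen False (False ## s) = False ## False ## ygen False s"
  by (subst ygen.code; simp)+
lemma ygen_inv_snth: "(\<forall>s. ygen False (ygen True s) !! n = s !! n) \<and> (\<forall>s. ygen True (ygen False s) !! n = s !! n)"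
proof (induction n rule: less_induct)
  case (less n)
  have IH1: "ygen False (ygen True s) !! m = s !! m" if "m < n" for m s using less that by blast
  have IH2: "ygen True (ygen False s) !! m = s !! m" if "m < n" for m s using less that by blast
  show ?case
  proof (intro allI conjI)
    fix s :: "bool stream"
    obtain c d t where s: "s = c ## d ## t" by (metis stream.collapse)
    show "ygen False (ygen True s) !! n = s !! n"
      by (cases c; cases d; cases n; simp add: s ygen_simps snth_Stream IH1 IH2; 
          (case_tac nat; simp add: snth_Stream IH1 IH2)?) 
    show "ygen True (ygen False s) !! n = s !! n"
      by (cases c; cases d; cases n; simp add: s ygen_simps snth_Stream IH1 IH2; 
          (case_tac nat; simp add: snth_Stream IH1 IH2)?) 
  qed
qed



lemma carrier_BG: "carrier BG = {f. bij f}"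
  unfolding BijGroup_def Bij_def extensional_def by simp

lemma mult_BG: "f \<in> carrier BG \<Longrightarrow> g \<in> carrier BG \<Longrightarrow> g \<otimes>\<^bsub>BG\<^esub> f = (\<lambda>x. g (f x))"
  by (simp add: BijGroup_def compose_def restrict_def)

lemma one_BG: "one BG = (\<lambda>x. x)"
  by (simp add: BijGroup_def restrict_def)

lemma inv_BG: "f \<in> carrier BG \<Longrightarrow> m_inv BG f = inv_into UNIV f"
proof -
  assume "f \<in> carrier BG"
  hence "f \<in> Bij UNIV" by (simp add: BijGroup_def)
  thus ?thesis by (simp add: inv_BijGroup restrict_def)
qed

interpretation BGg: group BG by (rule group_BijGroup)

lemma ymap_bij: "bij ymap"
proof (rule o_bij[of "ygen False"])
  show "ygen False \<circ> ymap = id"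
    by (rule ext, simp add: ymap_def, rule stream_eqI) (use ygen_inv_snth in blast)
  show "ymap \<circ> ygen False = id"
    by (rule ext, simp add: ymap_def, rule stream_eqI) (use ygen_inv_snth in blast)
qed

definition xinv :: "bool stream \<Rightarrow> bool stream" where
  "xinv s = (if \<not> shd s then False ## False ## stl s
             else if shd (stl s) then True ## stl (stl s)
             else False ## True ## stl (stl s))"

lemma xmap_bij: "bij xmap"
proof (rule o_bij[of xinv])
  show "xinv \<circ> xmap = id"
  proof (rule ext)
    fix s :: "bool stream"
    obtain c d t where s: "s = c ## d ## t" by (metis stream.collapse)
    show "(xinv \<circ> xmap) s = id s" by (cases c; cases d; simp add: s xmap_def xinv_def)
  qed
  show "xmap \<circ> xinv = id"
  proof (rule ext)
    fix s :: "bool stream"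
    obtain c d t where s: "s = c ## d ## t" by (metis stream.collapse)
    show "(xmap \<circ> xinv) s = id s" by (cases c; cases d; simp add: s xmap_def xinv_def)
  qed
qed

lemma cone_decomp: "stake (length w) s = w \<Longrightarrow> s = w @- sdrop (length w) s"
  by (metis stake_sdrop)

lemma at_word_inv: "(\<And>x. g (f x) = x) \<Longrightarrow> at_word w g (at_word w f s) = s"
  apply (cases "stake (length w) s = w")
   apply (simp add: at_word_def stake_shift sdrop_shift)
   apply (metis cone_decomp)
  apply (simp add: at_word_def)
  done

lemma at_word_bij: assumes "bij f" shows "bij (at_word w f)"
proof (rule o_bij[of "at_word w (inv_into UNIV f)"])
  show "at_word w (inv_into UNIV f) \<circ> at_word w f = id"
    by (rule ext, simp, rule at_word_inv, simp add: assms bij_is_inj)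
  show "at_word w f \<circ> at_word w (inv_into UNIV f) = id"
    by (rule ext, simp, rule at_word_inv, simp add: assms bij_is_surj surj_f_inv_f)
qed




lemma cls: "stake (n+1) s = replicate (n+1) True \<or> (\<exists>k\<le>n. \<exists>\<eta>. s = replicate k True @- False ## \<eta>)"
proof (induction n arbitrary: s)
  case 0
  obtain c t where s: "s = c ## t" by (metis stream.collapse)
  show ?case
  proof (cases c)
    case True thus ?thesis by (simp add: s)
  next
    case False thus ?thesis by (auto simp: s)
  qed
next
  case (Suc n)
  obtain c t where s: "s = c ## t" by (metis stream.collapse)
  show ?case
  proof (cases c)
    case False thus ?thesis by (auto simp: s intro!: exI[of _ 0])
  next
    case True
    from Suc[of t] show ?thesis
    proof
      assume "stake (n+1) t = replicate (n+1) True"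
      thus ?thesis using True by (simp add: s)
    next
      assume "\<exists>k\<le>n. \<exists>\<eta>. t = replicate k True @- False ## \<eta>"
      then obtain k \<eta> where "k \<le> n" "t = replicate k True @- False ## \<eta>" by blast
      thus ?thesis using True by (auto simp: s intro!: exI[of _ "Suc k"])
    qed
  qed
qed

lemma allT: "stake (n+1) s = replicate (n+1) True \<Longrightarrow> s = replicate (n+1) True @- sdrop (n+1) s"
  by (metis cone_decomp length_replicate)

lemma formB_facts:
  assumes "k \<le> n"
  shows "stake (n+1) (replicate k True @- False ## \<eta>) \<noteq> replicate (n+1) True"
    and "(LEAST j. (replicate k True @- False ## \<eta>) !! j = False) = k"
    and "sdrop (k+1) (replicate k True @- False ## \<eta>) = \<eta>"
proof -
  have "stake (n+1) (replicate k True @- False ## \<eta>) ! k = False"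
    using assms by (simp add: shift_snth)
  moreover have "replicate (n+1) True ! k = True" using assms by (subst nth_replicate) auto
  ultimately show "stake (n+1) (replicate k True @- False ## \<eta>) \<noteq> replicate (n+1) True" by metis
  show "(LEAST j. (replicate k True @- False ## \<eta>) !! j = False) = k"
  proof (rule Least_equality)
    show "(replicate k True @- False ## \<eta>) !! k = False" by (simp add: shift_snth)
    fix y assume "(replicate k True @- False ## \<eta>) !! y = False"
    thus "k \<le> y" by (cases "y < k") (auto simp: shift_snth)
  qed
  show "sdrop (k+1) (replicate k True @- False ## \<eta>) = \<eta>"
    by (simp add: sdrop_shift)
qed

lemma pmapA: "pmap n (replicate (n+1) True @- \<eta>) = False ## \<eta>"
  by (simp add: pmap_def stake_shift sdrop_shift del: replicate.simps add: replicate.simps(1))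

lemma pmapB: "k < n \<Longrightarrow> pmap n (replicate k True @- False ## \<eta>) = replicate (k+1) True @- False ## \<eta>"
  using formB_facts[of k n \<eta>] by (simp add: pmap_def Let_def)

lemma pmapC: "pmap n (replicate n True @- False ## \<eta>) = replicate (n+1) True @- \<eta>"
  using formB_facts[of n n \<eta>] by (simp add: pmap_def Let_def)

definition qmap :: "nat \<Rightarrow> bool stream \<Rightarrow> bool stream" where
  "qmap n s = (if stake (n + 1) s = replicate (n + 1) True then replicate n True @- False ## sdrop (n + 1) s
     else (let k = (LEAST k. s !! k = False) in
       if k = 0 then replicate (n + 1) True @- sdrop 1 s
       else replicate (k - 1) True @- False ## sdrop (k + 1) s))"

lemma qmapA: "qmap n (replicate (n+1) True @- \<eta>) = replicate n True @- False ## \<eta>"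
  by (simp add: qmap_def stake_shift sdrop_shift del: replicate.simps add: replicate.simps(1))

lemma qmap0: "qmap n (False ## \<eta>) = replicate (n+1) True @- \<eta>"
  using formB_facts[of 0 n \<eta>] by (simp add: qmap_def Let_def)

lemma qmapB: "k < n \<Longrightarrow> qmap n (replicate (k+1) True @- False ## \<eta>) = replicate k True @- False ## \<eta>"
  using formB_facts[of "k+1" n \<eta>] by (simp add: qmap_def Let_def)

lemma pq: "pmap n (qmap n t) = t"
proof -
  from cls[of n t] show ?thesis
  proof
    assume "stake (n+1) t = replicate (n+1) True"
    then obtain \<eta> where t: "t = replicate (n+1) True @- \<eta>" using allT by blast
    show ?thesis unfolding t qmapA pmapC ..
  next
    assume "\<exists>k\<le>n. \<exists>\<eta>. t = replicate k True @- False ## \<eta>"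
    then obtain k \<eta> where k: "k \<le> n" and t: "t = replicate k True @- False ## \<eta>" by blast
    show ?thesis
    proof (cases k)
      case 0 thus ?thesis using qmap0 pmapA t by simp
    next
      case (Suc j) thus ?thesis using qmapB[of j n \<eta>] pmapB[of j n \<eta>] t k by simp
    qed
  qed
qed

lemma qp: "qmap n (pmap n s) = s"
proof -
  from cls[of n s] show ?thesis
  proof
    assume "stake (n+1) s = replicate (n+1) True"
    then obtain \<eta> where s: "s = replicate (n+1) True @- \<eta>" using allT by blast
    show ?thesis unfolding s pmapA qmap0 ..
  next
    assume "\<exists>k\<le>n. \<exists>\<eta>. s = replicate k True @- False ## \<eta>"
    then obtain k \<eta> where k: "k \<le> n" and s: "s = replicate k True @- False ## \<eta>" by blast
    show ?thesis
    proof (cases "k < n")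
      case True thus ?thesis using qmapB[of k n \<eta>] pmapB[of k n \<eta>] s by simp
    next
      case False hence "k = n" using k by simp
      thus ?thesis using qmapA pmapC s by simp
    qed
  qed
qed

lemma pmap_bij: "bij (pmap n)"
  by (rule o_bij[of "qmap n"]) (auto simp: pq qp)




lemma x_at_bij: "bij (x_at w)" by (simp add: x_at_def at_word_bij xmap_bij)
lemma y_at_bij: "bij (y_at w)" by (simp add: y_at_def at_word_bij ymap_bij)

abbreviation "AA \<equiv> range x_at"
abbreviation "YY \<equiv> range y_at"
abbreviation "PP \<equiv> range pmap"

lemma AA_sub: "AA \<subseteq> carrier BG" by (auto simp: carrier_BG x_at_bij)
lemma YY_sub: "YY \<subseteq> carrier BG" by (auto simp: carrier_BG y_at_bij)
lemma PP_sub: "PP \<subseteq> carrier BG" by (auto simp: carrier_BG pmap_bij)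

lemma gen_L: "X \<subseteq> carrier BG \<Longrightarrow> Z \<subseteq> carrier BG \<Longrightarrow> generate BG (generate BG X \<union> Z) = generate BG (X \<union> Z)"
proof
  assume X: "X \<subseteq> carrier BG" and Z: "Z \<subseteq> carrier BG"
  have sg: "subgroup (generate BG (X \<union> Z)) BG" using X Z by (intro BGg.generate_is_subgroup) auto
  have "generate BG X \<subseteq> generate BG (X \<union> Z)" by (rule BGg.mono_generate) auto
  moreover have "Z \<subseteq> generate BG (X \<union> Z)" by (auto intro: generate.incl)
  ultimately show "generate BG (generate BG X \<union> Z) \<subseteq> generate BG (X \<union> Z)"
    by (intro BGg.generate_subgroup_incl[OF _ sg]) auto
  show "generate BG (X \<union> Z) \<subseteq> generate BG (generate BG X \<union> Z)"
    by (rule BGg.mono_generate) (auto intro: generate.incl)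
qed

lemma gen_L2: "X \<subseteq> carrier BG \<Longrightarrow> Z \<subseteq> carrier BG \<Longrightarrow> generate BG (Z \<union> generate BG X) = generate BG (Z \<union> X)"
  using gen_L[of X Z] by (simp add: Un_commute)

definition HH where "HH = generate BG ({y_at [True, False]} \<union> AA \<union> PP)"

lemma HH_sub: "({y_at [True, False]} \<union> AA \<union> PP) \<subseteq> carrier BG"
  using AA_sub PP_sub YY_sub by auto

lemma HH_sg: "subgroup HH BG" unfolding HH_def by (rule BGg.generate_is_subgroup[OF HH_sub])

lemma HH_bij: "g \<in> HH \<Longrightarrow> bij g"
  using subgroup.subset[OF HH_sg] carrier_BG by auto

definition conn where "conn s t \<longleftrightarrow> (\<exists>g\<in>HH. \<forall>\<eta>. g (s @- \<eta>) = t @- \<eta>)"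

lemma conn_refl: "conn s s"
  unfolding conn_def using subgroup.one_closed[OF HH_sg] by (auto simp: one_BG)

lemma conn_trans: "conn s t \<Longrightarrow> conn t u \<Longrightarrow> conn s u"
  unfolding conn_def
proof (elim bexE)
  fix g h assume g: "g \<in> HH" "\<forall>\<eta>. g (s @- \<eta>) = t @- \<eta>" and h: "h \<in> HH" "\<forall>\<eta>. h (t @- \<eta>) = u @- \<eta>"
  have "h \<otimes>\<^bsub>BG\<^esub> g \<in> HH" using g h subgroup.m_closed[OF HH_sg] by auto
  moreover have "h \<otimes>\<^bsub>BG\<^esub> g = (\<lambda>x. h (g x))"
    using g h HH_bij by (intro mult_BG) (auto simp: carrier_BG)
  ultimately show "\<exists>g\<in>HH. \<forall>\<eta>. g (s @- \<eta>) = u @- \<eta>" using g h by (intro bexI[of _ "h \<otimes>\<^bsub>BG\<^esub> g"]) auto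
qed

lemma conn_sym: "conn s t \<Longrightarrow> conn t s"
  unfolding conn_def
proof (elim bexE)
  fix g assume g: "g \<in> HH" "\<forall>\<eta>. g (s @- \<eta>) = t @- \<eta>"
  have "m_inv BG g \<in> HH" using g subgroup.m_inv_closed[OF HH_sg] by auto
  moreover have "m_inv BG g = inv_into UNIV g"
    using g HH_bij by (intro inv_BG) (auto simp: carrier_BG)
  moreover have "inv_into UNIV g (t @- \<eta>) = s @- \<eta>" for \<eta>
    using g HH_bij[OF g(1)] by (metis bij_is_inj inv_f_f)
  ultimately show "\<exists>g\<in>HH. \<forall>\<eta>. g (t @- \<eta>) = s @- \<eta>" by (intro bexI[of _ "m_inv BG g"]) auto
qed

lemma conn_ext: "conn s t \<Longrightarrow> conn (s @ w) (t @ w)"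
  unfolding conn_def by auto

lemma inHH: "x_at [] \<in> HH" "pmap 0 \<in> HH" "y_at [True, False] \<in> HH"
  unfolding HH_def by (auto intro: generate.incl)

lemma x_at_Nil: "x_at [] = xmap" by (simp add: x_at_def at_word_def fun_eq_iff)

lemma conn_01: "conn [False] [True]"
proof -
  have "pmap 0 ([False] @- \<eta>) = [True] @- \<eta>" for \<eta>
    using pmapC[of 0 \<eta>] by simp
  thus ?thesis unfolding conn_def using inHH by blast
qed

lemma conn_x: "conn [False, False] [False]" "conn [True] [True, True]" "conn [False, True] [True, False]"
  unfolding conn_def using inHH(1) by (auto simp: x_at_Nil xmap_def intro!: bexI[of _ "x_at []"])

lemma conn_all: "conn (a # w) [False]"
proof (induction "length w" arbitrary: a w)
  case 0
  then have w: "w = []" by simp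
  show ?case using conn_refl conn_sym[OF conn_01] by (cases a) (auto simp: w)
next
  case (Suc n)
  then obtain b w' where w: "w = b # w'" "length w' = n" by (cases w) auto
  have IH: "conn (c # w') [False]" for c using Suc(1)[of w' c] w by simp
  have a1: "conn (False # True # w') (True # True # w')" using conn_ext[OF conn_01, of "True # w'"] by simp
  have a2: "conn (True # True # w') (True # w')" using conn_sym[OF conn_ext[OF conn_x(2), of w']] by simp
  have a3: "conn (True # False # w') (False # True # w')" using conn_sym[OF conn_ext[OF conn_x(3), of w']] by simp
  have a4: "conn (False # False # w') (False # w')" using conn_ext[OF conn_x(1), of w'] by simp
  have FT: "conn (False # True # w') (True # w')" using conn_trans[OF a1 a2] .
  show ?case
  proof (cases a; cases b)
    assume "a" "b" thus ?thesis using conn_trans[OF a2 IH] by (simp add: w)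
  next
    assume "a" "\<not> b" thus ?thesis using conn_trans[OF conn_trans[OF a3 FT] IH] by (simp add: w)
  next
    assume "\<not> a" "b" thus ?thesis using conn_trans[OF FT IH] by (simp add: w)
  next
    assume "\<not> a" "\<not> b" thus ?thesis using conn_trans[OF a4 IH] by (simp add: w)
  qed
qed

lemma at_word_commute:
  assumes "bij g" "\<forall>\<eta>. g (s @- \<eta>) = t @- \<eta>"
  shows "at_word t f (g z) = g (at_word s f z)"
proof (cases "stake (length s) z = s")
  case True
  define \<eta> where "\<eta> = sdrop (length s) z"
  have z: "z = s @- \<eta>" using cone_decomp[OF True] \<eta>_def by simp
  show ?thesis using assms(2) by (simp add: z at_word_def stake_shift sdrop_shift)
next
  case False
  have "stake (length t) (g z) \<noteq> t"
  proof
    assume "stake (length t) (g z) = t"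
    hence "g z = t @- sdrop (length t) (g z)" by (rule cone_decomp)
    moreover obtain th where th: "th = sdrop (length t) (g z)" by simp
    ultimately have "g z = t @- th" by simp
    also have "\<dots> = g (s @- th)" using assms(2) by simp
    finally have "z = s @- th" using bij_is_inj[OF assms(1)] by (simp add: inj_eq)
    hence "stake (length s) z = s" by (simp add: stake_shift)
    thus False using False by simp
  qed
  thus ?thesis using False by (simp add: at_word_def)
qed

lemma conj_in: assumes "conn s t" "y_at t \<in> HH" shows "y_at s \<in> HH"
proof -
  obtain g where g: "g \<in> HH" "\<forall>\<eta>. g (s @- \<eta>) = t @- \<eta>" using assms(1) conn_def by auto
  have bg: "bij g" by (rule HH_bij[OF g(1)])
  have gc: "g \<in> carrier BG" "y_at t \<in> carrier BG" "y_at s \<in> carrier BG"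
    using bg y_at_bij by (auto simp: carrier_BG)
  have "g \<otimes>\<^bsub>BG\<^esub> y_at s = y_at t \<otimes>\<^bsub>BG\<^esub> g"
    using gc by (simp add: mult_BG y_at_def at_word_commute[OF bg g(2)])
  hence "y_at s = m_inv BG g \<otimes>\<^bsub>BG\<^esub> (y_at t \<otimes>\<^bsub>BG\<^esub> g)"
    using BGg.inv_solve_left[OF gc(3) gc(1) BGg.m_closed[OF gc(2) gc(1)]] by simp
  thus ?thesis using g assms(2) subgroup.m_closed[OF HH_sg] subgroup.m_inv_closed[OF HH_sg] by auto
qed

lemma y_nonempty: "y_at (a # w) \<in> HH"
  using conj_in[OF conn_trans[OF conn_all conn_sym[OF conn_all]] inHH(3)] .

lemma y_root_fun: "ymap (y_at [False, True] z) = xmap (y_at [True] (y_at [False, False] z))"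
proof -
  have inv: "ygen False (ygen True s) = s" for s by (rule stream_eqI) (use ygen_inv_snth in blast)
  obtain c d u where z: "z = c ## d ## u" by (metis stream.collapse)
  show ?thesis
    by (cases c; cases d; simp add: z y_at_def at_word_def ymap_def ygen_simps xmap_def inv)
qed

lemma y_root_eq: "y_at [] \<otimes>\<^bsub>BG\<^esub> y_at [False, True] = (x_at [] \<otimes>\<^bsub>BG\<^esub> y_at [True]) \<otimes>\<^bsub>BG\<^esub> y_at [False, False]"
proof -
  have c: "y_at w \<in> carrier BG" "x_at w \<in> carrier BG" for w using y_at_bij x_at_bij by (auto simp: carrier_BG)
  have yn: "y_at [] = ymap" by (simp add: y_at_def at_word_def fun_eq_iff)
  have m1: "x_at [] \<otimes>\<^bsub>BG\<^esub> y_at [True] \<in> carrier BG" using c by blast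
  have l: "y_at [] \<otimes>\<^bsub>BG\<^esub> y_at [False, True] = (\<lambda>z. y_at [] (y_at [False, True] z))"
    by (rule mult_BG[OF c(1) c(1)])
  have r: "(x_at [] \<otimes>\<^bsub>BG\<^esub> y_at [True]) \<otimes>\<^bsub>BG\<^esub> y_at [False, False]
      = (\<lambda>z. (x_at [] \<otimes>\<^bsub>BG\<^esub> y_at [True]) (y_at [False, False] z))"
    by (rule mult_BG[OF c(1) m1])
  have r2: "x_at [] \<otimes>\<^bsub>BG\<^esub> y_at [True] = (\<lambda>z. x_at [] (y_at [True] z))"
    by (rule mult_BG[OF c(1) c(2)])
  show ?thesis unfolding l r unfolding r2 by (simp add: yn x_at_Nil y_root_fun)
qed

lemma y_all: "y_at w \<in> HH"
proof (cases w)
  case (Cons a w') thus ?thesis using y_nonempty by simp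
next
  case Nil
  have c: "y_at w \<in> carrier BG" "x_at w \<in> carrier BG" for w using y_at_bij x_at_bij by (auto simp: carrier_BG)
  have "y_at [] = ((x_at [] \<otimes>\<^bsub>BG\<^esub> y_at [True]) \<otimes>\<^bsub>BG\<^esub> y_at [False, False]) \<otimes>\<^bsub>BG\<^esub> m_inv BG (y_at [False, True])"
    using BGg.inv_solve_right[OF c(1) BGg.m_closed[OF BGg.m_closed[OF c(2) c(1)] c(1)] c(1)] y_root_eq
    by simp
  moreover have "x_at [] \<in> HH" "y_at [True] \<in> HH" "y_at [False, False] \<in> HH" "y_at [False, True] \<in> HH"
    using inHH y_nonempty by auto
  ultimately show ?thesis using Nil subgroup.m_closed[OF HH_sg] subgroup.m_inv_closed[OF HH_sg] by simp
qed

lemma gen_eq_HH: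
  assumes "{y_at [True, False]} \<union> AA \<union> PP \<subseteq> S" "S \<subseteq> AA \<union> YY \<union> PP"
  shows "generate BG S = HH"
proof
  show "generate BG S \<subseteq> HH"
  proof (rule BGg.generate_subgroup_incl[OF _ HH_sg])
    show "S \<subseteq> HH" using assms(2) y_all unfolding HH_def by (auto intro: generate.incl)
  qed
  show "HH \<subseteq> generate BG S" unfolding HH_def by (rule BGg.mono_generate[OF assms(1)])
qed

theorem lemma6p1:
  shows "grpShat = generate BG (grp_yGy \<union> grpT)
    \<and> generate BG (grp_yGy \<union> grpT) = generate BG (grp_Gy \<union> grpT)
    \<and> generate BG (grp_Gy \<union> grpT) = generate BG (grp_yG \<union> grpT)
    \<and> generate BG (grp_yG \<union> grpT) = generate BG (grp_G \<union> grpT)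
    \<and> generate BG (grp_G \<union> grpT) = generate BG ({y_at [True, False]} \<union> grpT)"
proof -
  have sub: "A \<subseteq> carrier BG" if "A \<subseteq> AA \<union> YY \<union> PP" for A using that AA_sub YY_sub PP_sub by blast
  have T: "grpT = generate BG (AA \<union> PP)" unfolding grpT_def grpF_def by (rule gen_L[OF AA_sub PP_sub])
  have G: "generate BG (generate BG (grpF \<union> Y) \<union> grpT) = HH" 
    if "y_at [True, False] \<in> Y" "Y \<subseteq> YY" for Y
  proof -
    have "generate BG (grpF \<union> Y) = generate BG (AA \<union> Y)" unfolding grpF_def
      by (rule gen_L) (use that AA_sub YY_sub in auto)
    hence "generate BG (generate BG (grpF \<union> Y) \<union> grpT) = generate BG (generate BG (AA \<union> Y) \<union> grpT)" by simp
    also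
    have "generate BG (generate BG (AA \<union> Y) \<union> grpT) = generate BG ((AA \<union> Y) \<union> generate BG (AA \<union> PP))"
      unfolding T by (rule gen_L) (use that AA_sub YY_sub PP_sub BGg.generate_incl[of "AA \<union> PP"] in auto)
    also have "generate BG ((AA \<union> Y) \<union> generate BG (AA \<union> PP)) = generate BG ((AA \<union> Y) \<union> (AA \<union> PP))"
      by (rule gen_L2) (use that AA_sub YY_sub PP_sub in auto)
    also have "\<dots> = HH" by (rule gen_eq_HH) (use that in auto)
    finally show ?thesis .
  qed
  have n: "\<forall>n. [True, False] \<noteq> replicate n False \<and> [True, False] \<noteq> replicate n True"
  proof
    fix n show "[True, False] \<noteq> replicate n False \<and> [True, False] \<noteq> replicate n True"
      by (cases n; simp; case_tac nat; simp)
  qed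
  have e1: "grpShat = HH" unfolding grpShat_def by (rule gen_eq_HH) auto
  have e2: "generate BG (grp_yGy \<union> grpT) = HH" unfolding grp_yGy_def by (rule G) auto
  have e3: "generate BG (grp_Gy \<union> grpT) = HH" unfolding grp_Gy_def by (rule G) (use n in auto)
  have e4: "generate BG (grp_yG \<union> grpT) = HH" unfolding grp_yG_def by (rule G) (use n in auto)
  have e5: "generate BG (grp_G \<union> grpT) = HH" unfolding grp_G_def by (rule G) (use n in auto)
  have e6: "generate BG ({y_at [True, False]} \<union> grpT) = HH"
  proof -
    have "generate BG ({y_at [True, False]} \<union> grpT) = generate BG ({y_at [True, False]} \<union> (AA \<union> PP))"
      unfolding T by (rule gen_L2) (use AA_sub YY_sub PP_sub in auto)
    also have "\<dots> = HH" by (rule gen_eq_HH) auto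
    finally show ?thesis .
  qed
  show ?thesis using e1 e2 e3 e4 e5 e6 by simp
qed


end
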